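(* Let $\sigma_0>0$, let $F$ be an $M\times N$ matrix, let $\mathcal{M}$ be a linear subspace of the space of $M\times N$ matrices, and let $(\alpha_n)$ satisfy $0<\alpha_n\le1$ for all $n$. Let $\Lambda^0=0$ and for $n\ge0$ $$X^{n+1}=\mathfrak{S}_{f_0}\Big(F-\frac{\Lambda^n}{2}\Big),\qquad \Lambda^{n+1}=\Lambda^n+\alpha_nP_{\mathcal{M}^\perp}(X^{n+1}).$$ Then the sequences $(X^n)_{n\ge1}$ and $(\Lambda^n)_{n\ge1}$ are bounded.
   Context: The space of $M\times N$ matrices carries the real inner product $\langle X,Y\rangle=\mathrm{Re}\,\mathrm{tr}(Y^*X)$ with Frobenius norm; $P_{\mathcal{M}^\perp}$ is the orthogonal projection onto $\mathcal{M}^\perp$. For $f:[0,\infty)\to\mathbb{C}$ and a matrix $A=U\Sigma_\phi V^*$ (singular value decomposition with singular values $\phi_j$), $\mathfrak{S}_f(A)=U\Sigma_{f(\phi)}V^*$ replaces each singular value $\phi_j$ by $f(\phi_j)$. Here $f_0(x)=0$ for $x<\sigma_0$ and $f_0(x)=x$ for $x\ge\sigma_0$. *)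

theory Defs
  imports "HOL-Analysis.Analysis"
begin

text \<open>Complex M x N matrices are modelled as complex^'n^'m (M = CARD('m), N = CARD('n)).
  The library norm on this type is the Frobenius norm and the library inner product is
  Re tr(Y^* X).\<close>

definition cvinner :: "complex^'m \<Rightarrow> complex^'m \<Rightarrow> complex" where
  "cvinner x y = (\<Sum>i\<in>UNIV. x$i * cnj (y$i))"

definition orthonormal_vecs :: "nat \<Rightarrow> (nat \<Rightarrow> complex^'m) \<Rightarrow> bool" where
  "orthonormal_vecs r u \<longleftrightarrow>
     (\<forall>j<r. \<forall>k<r. cvinner (u j) (u k) = (if j = k then 1 else 0))"

text \<open>U diag(s) V^*, written column-wise: sum over k of s_k u_k v_k^*, k < min(M,N).\<close>
definition svd_synth :: "nat \<Rightarrow> (nat \<Rightarrow> complex^'m) \<Rightarrow> (nat \<Rightarrow> complex) \<Rightarrow> (nat \<Rightarrow> complex^'n)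
    \<Rightarrow> complex^'n^'m" where
  "svd_synth r u s v = (\<chi> i j. \<Sum>k<r. s k * (u k)$i * cnj ((v k)$j))"

definition is_svd :: "complex^'n^'m \<Rightarrow> (nat \<Rightarrow> complex^'m) \<Rightarrow> (nat \<Rightarrow> real)
    \<Rightarrow> (nat \<Rightarrow> complex^'n) \<Rightarrow> bool" where
  "is_svd A u \<phi> v \<longleftrightarrow>
     (let r = min CARD('m) CARD('n) in
        orthonormal_vecs r u \<and> orthonormal_vecs r v \<and> (\<forall>k<r. 0 \<le> \<phi> k) \<and>
        A = svd_synth r u (\<lambda>k. complex_of_real (\<phi> k)) v)"

text \<open>B = S_f(A) for (some) singular value decomposition of A.\<close>
definition spec_apply :: "(real \<Rightarrow> complex) \<Rightarrow> complex^'n^'m \<Rightarrow> complex^'n^'m \<Rightarrow> bool" where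
  "spec_apply f A B \<longleftrightarrow>
     (\<exists>u \<phi> v. is_svd A u \<phi> v \<and>
        B = svd_synth (min CARD('m) CARD('n)) u (\<lambda>k. f (\<phi> k)) v)"

definition f0 :: "real \<Rightarrow> real \<Rightarrow> complex" where
  "f0 \<sigma>0 x = (if x < \<sigma>0 then 0 else complex_of_real x)"

definition cmat_subspace :: "(complex^'n^'m) set \<Rightarrow> bool" where
  "cmat_subspace S \<longleftrightarrow> subspace S \<and> (\<forall>c::complex. \<forall>x\<in>S. (\<chi> i j. c * x$i$j) \<in> S)"

definition orth_comp :: "'a::real_inner set \<Rightarrow> 'a set" where
  "orth_comp S = {x. \<forall>y\<in>S. inner x y = 0}"

definition proj_perp :: "'a::real_inner set \<Rightarrow> 'a \<Rightarrow> 'a" where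
  "proj_perp S x = (THE p. p \<in> orth_comp S \<and> x - p \<in> S)"

end

theory Submission
  imports Defs
begin

lemma proj_perp_char:
  fixes S :: "'a::euclidean_space set"
  assumes "subspace S"
  shows "proj_perp S x \<in> orth_comp S \<and> x - proj_perp S x \<in> S"
proof -
  obtain y z where y: "y \<in> span S" and z: "\<And>w. w \<in> span S \<Longrightarrow> orthogonal z w" and e: "x = y + z"
    using orthogonal_subspace_decomp_exists[of S x] by blast
  have sp: "span S = S" using assms by (simp add: span_eq_iff)
  have ex: "z \<in> orth_comp S \<and> x - z \<in> S"
    using y z e sp by (auto simp: orth_comp_def orthogonal_def)
  have un: "p = z" if "p \<in> orth_comp S \<and> x - p \<in> S" for p
  proof -
    have "z - p = (x - p) - (x - z)" by simp
    hence "z - p \<in> S" using that ex assms by (metis subspace_diff)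
    moreover have "inner (z - p) (z - p) = 0"
      using that ex \<open>z - p \<in> S\<close> by (simp add: orth_comp_def inner_diff_left)
    ultimately show ?thesis by simp
  qed
  have "proj_perp S x = z" unfolding proj_perp_def
    by (rule the_equality) (use ex un in blast)+
  thus ?thesis using ex by simp
qed

lemma proj_perp_uniq:
  fixes S :: "'a::euclidean_space set"
  assumes "subspace S" "p \<in> orth_comp S" "x - p \<in> S"
  shows "proj_perp S x = p"
proof -
  have c: "proj_perp S x \<in> orth_comp S \<and> x - proj_perp S x \<in> S" by (rule proj_perp_char[OF assms(1)])
  have "p - proj_perp S x = (x - proj_perp S x) - (x - p)" by simp
  hence d: "p - proj_perp S x \<in> S" using c assms by (metis subspace_diff)
  have "inner (p - proj_perp S x) (p - proj_perp S x) = 0"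
    using c assms d by (simp add: orth_comp_def inner_diff_left)
  thus ?thesis by simp
qed

lemma proj_perp_norm:
  fixes S :: "'a::euclidean_space set"
  assumes "subspace S"
  shows "norm (proj_perp S x) \<le> norm x"
proof -
  let ?p = "proj_perp S x"
  have c: "?p \<in> orth_comp S \<and> x - ?p \<in> S" by (rule proj_perp_char[OF assms])
  have o: "inner ?p (x - ?p) = 0" using c by (simp add: orth_comp_def)
  have "x = ?p + (x - ?p)" by simp
  hence "norm x ^ 2 = norm ?p ^ 2 + norm (x - ?p) ^ 2"
    by (metis o norm_add_Pythagorean orthogonal_def)
  hence "norm ?p ^ 2 \<le> norm x ^ 2" by simp
  thus ?thesis by (simp add: power2_le_iff_abs_le)
qed

lemma orth_comp_add: "a \<in> orth_comp S \<Longrightarrow> b \<in> orth_comp S \<Longrightarrow> a + b \<in> orth_comp S"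
  by (simp add: orth_comp_def inner_add_left)
lemma orth_comp_scale: "a \<in> orth_comp S \<Longrightarrow> c *\<^sub>R a \<in> orth_comp S"
  by (simp add: orth_comp_def)

lemma unit_comp:
  fixes u :: "complex^'m"
  assumes "cvinner u u = 1"
  shows "norm (u$i) \<le> 1"
proof -
  have "(\<Sum>i\<in>UNIV. complex_of_real (norm (u$i) ^ 2)) = 1"
    using assms unfolding cvinner_def by (simp only: complex_norm_square[symmetric])
  hence s: "(\<Sum>i\<in>UNIV. norm (u$i) ^ 2) = 1"
    by (metis of_real_eq_1_iff of_real_sum)
  have "norm (u$i) ^ 2 \<le> (\<Sum>i\<in>UNIV. norm (u$i) ^ 2)"
    by (rule member_le_sum) auto
  hence "norm (u$i) ^ 2 \<le> 1 ^ 2" using s by simp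
  thus ?thesis using power2_le_imp_le[of "norm (u$i)" 1] by simp
qed

lemma mat_norm_le:
  fixes A :: "complex^'n^'m"
  assumes "\<And>i j. norm (A$i$j) \<le> c"
  shows "norm A \<le> real CARD('m) * real CARD('n) * c"
proof -
  have "norm A \<le> (\<Sum>i\<in>UNIV. norm (A$i))"
    unfolding norm_vec_def by (rule L2_set_le_sum) simp
  also have "\<dots> \<le> (\<Sum>i\<in>(UNIV::'m set). real CARD('n) * c)"
  proof (rule sum_mono)
    fix i
    have "norm (A$i) \<le> (\<Sum>j\<in>UNIV. norm (A$i$j))"
      unfolding norm_vec_def by (rule L2_set_le_sum) simp
    also have "\<dots> \<le> (\<Sum>j\<in>(UNIV::'n set). c)" by (rule sum_mono) (rule assms)
    finally show "norm (A$i) \<le> real CARD('n) * c" by simp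
  qed
  finally show ?thesis by simp
qed

lemma spec_err:
  fixes A B :: "complex^'n^'m"
  assumes "spec_apply (f0 \<sigma>0) A B" "\<sigma>0 > 0"
  shows "norm (B - A) \<le> real CARD('m) * real CARD('n) * (real (min CARD('m) CARD('n)) * \<sigma>0)"
proof -
  let ?r = "min CARD('m) CARD('n)"
  obtain u \<phi> v where s: "is_svd A u \<phi> v" and B: "B = svd_synth ?r u (\<lambda>k. f0 \<sigma>0 (\<phi> k)) v"
    using assms(1) unfolding spec_apply_def by blast
  have ou: "orthonormal_vecs ?r u" and ov: "orthonormal_vecs ?r v" and ph: "\<forall>k<?r. 0 \<le> \<phi> k"
    and A: "A = svd_synth ?r u (\<lambda>k. complex_of_real (\<phi> k)) v"
    using s unfolding is_svd_def Let_def by auto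
  show ?thesis
  proof (rule mat_norm_le)
    fix i j
    have "(B - A)$i$j = (\<Sum>k<?r. (f0 \<sigma>0 (\<phi> k) - complex_of_real (\<phi> k)) * (u k)$i * cnj ((v k)$j))"
      unfolding A B svd_synth_def by (simp add: sum_subtractf algebra_simps)
    also have "norm \<dots> \<le> (\<Sum>k<?r. norm ((f0 \<sigma>0 (\<phi> k) - complex_of_real (\<phi> k)) * (u k)$i * cnj ((v k)$j)))"
      by (rule norm_sum)
    also have "\<dots> \<le> (\<Sum>k<?r. \<sigma>0)"
    proof (rule sum_mono)
      fix k assume k: "k \<in> {..<?r}"
      have "cvinner (u k) (u k) = 1" using ou k unfolding orthonormal_vecs_def by auto
      hence nu: "norm ((u k)$i) \<le> 1" by (rule unit_comp)
      have "cvinner (v k) (v k) = 1" using ov k unfolding orthonormal_vecs_def by auto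
      hence nv: "norm ((v k)$j) \<le> 1" by (rule unit_comp)
      have nf: "norm (f0 \<sigma>0 (\<phi> k) - complex_of_real (\<phi> k)) \<le> \<sigma>0"
        using ph k assms(2) by (auto simp: f0_def)
      have "norm ((f0 \<sigma>0 (\<phi> k) - complex_of_real (\<phi> k)) * (u k)$i * cnj ((v k)$j))
          = norm (f0 \<sigma>0 (\<phi> k) - complex_of_real (\<phi> k)) * norm ((u k)$i) * norm ((v k)$j)"
        by (simp add: norm_mult)
      also have "\<dots> \<le> \<sigma>0 * 1 * 1"
        using assms(2) by (intro mult_mono nf nu nv) auto
      finally show "norm ((f0 \<sigma>0 (\<phi> k) - complex_of_real (\<phi> k)) * (u k)$i * cnj ((v k)$j)) \<le> \<sigma>0" by simp
    qed
    finally show "norm ((B - A)$i$j) \<le> real ?r * \<sigma>0" by simp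
  qed
qed

theorem proposition5:
  fixes \<sigma>0 :: real and F :: "complex^'n^'m" and \<M> :: "(complex^'n^'m) set"
    and \<alpha> :: "nat \<Rightarrow> real" and X \<Lambda> :: "nat \<Rightarrow> complex^'n^'m"
  assumes "\<sigma>0 > 0"
    and "cmat_subspace \<M>"
    and "\<And>n. 0 < \<alpha> n \<and> \<alpha> n \<le> 1"
    and "\<Lambda> 0 = 0"
    and "\<And>n. spec_apply (f0 \<sigma>0) (F - (1/2) *\<^sub>R \<Lambda> n) (X (Suc n))"
    and "\<And>n. \<Lambda> (Suc n) = \<Lambda> n + \<alpha> n *\<^sub>R proj_perp \<M> (X (Suc n))"
  shows "bounded (X ` {1..}) \<and> bounded (\<Lambda> ` {1..})"
proof -
  have sub: "subspace \<M>" using assms(2) by (simp add: cmat_subspace_def)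
  define c where "c = real CARD('m) * real CARD('n) * (real (min CARD('m) CARD('n)) * \<sigma>0)"
  define E where "E n = X (Suc n) - (F - (1/2) *\<^sub>R \<Lambda> n)" for n
  have En: "norm (E n) \<le> c" for n unfolding E_def c_def by (rule spec_err[OF assms(5) assms(1)])
  define B where "B = 2 * (norm F + c)"
  have main: "\<Lambda> n \<in> orth_comp \<M> \<and> norm (\<Lambda> n) \<le> B" for n
  proof (induction n)
    case 0
    have "0 \<le> c" using En[of 0] by (meson norm_ge_zero order_trans)
    thus ?case using assms(4) by (simp add: B_def orth_comp_def)
  next
    case (Suc n)
    let ?P = "proj_perp \<M> (F + E n)"
    have pc: "?P \<in> orth_comp \<M> \<and> (F + E n) - ?P \<in> \<M>" by (rule proj_perp_char[OF sub])
    have "proj_perp \<M> (X (Suc n)) = ?P - (1/2) *\<^sub>R \<Lambda> n"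
    proof (rule proj_perp_uniq[OF sub])
      show "?P - (1/2) *\<^sub>R \<Lambda> n \<in> orth_comp \<M>"
        using orth_comp_add[OF conjunct1[OF pc] orth_comp_scale[OF conjunct1[OF Suc.IH], of "-(1/2)"]] by simp
      have eq: "X (Suc n) - (?P - (1/2) *\<^sub>R \<Lambda> n) = (F + E n) - ?P" unfolding E_def by (simp add: algebra_simps)
      show "X (Suc n) - (?P - (1/2) *\<^sub>R \<Lambda> n) \<in> \<M>" unfolding eq using pc by blast
    qed
    note pe = this
    have L: "\<Lambda> (Suc n) = (1 - \<alpha> n / 2) *\<^sub>R \<Lambda> n + \<alpha> n *\<^sub>R ?P"
      unfolding assms(6)[of n] pe by (simp add: algebra_simps)
    have a: "0 < \<alpha> n" "\<alpha> n \<le> 1" using assms(3) by auto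
    have "\<Lambda> (Suc n) \<in> orth_comp \<M>"
      unfolding L by (intro orth_comp_add orth_comp_scale Suc.IH[THEN conjunct1] pc[THEN conjunct1])
    moreover have "norm (\<Lambda> (Suc n)) \<le> B"
    proof -
      have nP: "norm ?P \<le> norm F + c"
        using proj_perp_norm[OF sub, of "F + E n"] norm_triangle_ineq[of F "E n"] En[of n] by linarith
      have "norm (\<Lambda> (Suc n)) \<le> norm ((1 - \<alpha> n / 2) *\<^sub>R \<Lambda> n) + norm (\<alpha> n *\<^sub>R ?P)"
        unfolding L by (rule norm_triangle_ineq)
      also have "\<dots> = (1 - \<alpha> n / 2) * norm (\<Lambda> n) + \<alpha> n * norm ?P" using a by simp
      also have "\<dots> \<le> (1 - \<alpha> n / 2) * B + \<alpha> n * (norm F + c)"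
        using a Suc.IH nP by (intro add_mono mult_left_mono) auto
      also have "\<dots> = B" by (simp add: B_def algebra_simps)
      finally show ?thesis .
    qed
    ultimately show ?case by simp
  qed
  have bX: "norm (X (Suc n)) \<le> norm F + B / 2 + c" for n
  proof -
    have "X (Suc n) = F - (1/2) *\<^sub>R \<Lambda> n + E n" unfolding E_def by simp
    hence "norm (X (Suc n)) \<le> norm (F - (1/2) *\<^sub>R \<Lambda> n) + norm (E n)"
      by (simp add: norm_triangle_ineq)
    moreover have "norm (F - (1/2) *\<^sub>R \<Lambda> n) \<le> norm F + norm ((1/2) *\<^sub>R \<Lambda> n)"
      by (rule norm_triangle_ineq4)
    ultimately have "norm (X (Suc n)) \<le> norm F + norm ((1/2) *\<^sub>R \<Lambda> n) + norm (E n)"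
      by linarith
    thus ?thesis using main[of n] En[of n] by simp
  qed
  show ?thesis
  proof
    show "bounded (X ` {1..})" unfolding bounded_iff
    proof (intro exI ballI)
      fix x assume "x \<in> X ` {1..}"
      then obtain m where "m \<ge> 1" "x = X m" by auto
      then obtain n where "x = X (Suc n)" by (metis Suc_pred' less_le_trans zero_less_one)
      thus "norm x \<le> norm F + B / 2 + c" using bX by simp
    qed
    show "bounded (\<Lambda> ` {1..})" unfolding bounded_iff
    proof (intro exI ballI)
      fix x assume "x \<in> \<Lambda> ` {1..}"
      then obtain m where "x = \<Lambda> m" by auto
      thus "norm x \<le> B" using main[of m] by simp
    qed
  qed
qed

end
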